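(* Let $T$ be a hypercyclic bounded operator on a separable Banach space $X$. For any $\alpha>0$, there exists a comeager set of vectors $x\in HC(T)$ such that $\overline{\mathrm{dens}}\,\mathcal N_T(x,B_\alpha)=c(T)$.
   Context: $HC(T)$ is the set of vectors with dense $T$-orbit. $\mathcal N_T(x,B)=\{i\in\mathbb N:T^ix\in B\}$; $\overline{\mathrm{dens}}(D)=\limsup_N\frac1N\#(D\cap[1,N])$; $B_R$ is the closed ball of radius $R$ centred at $0$. $c(T)=\sup_{R>0}\sup_{x\in HC(T)}\overline{\mathrm{dens}}\,\mathcal N_T(x,B_R)$. *)

theory Defs
  imports "HOL-Analysis.Analysis"
begin

definition HC :: "('a::topological_space \<Rightarrow> 'a) \<Rightarrow> 'a set" where
  "HC T = {x. closure (range (\<lambda>n. (T ^^ n) x)) = UNIV}"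

definition hypercyclic :: "('a::topological_space \<Rightarrow> 'a) \<Rightarrow> bool" where
  "hypercyclic T \<longleftrightarrow> HC T \<noteq> {}"

definition return_set :: "('a \<Rightarrow> 'a) \<Rightarrow> 'a \<Rightarrow> 'a set \<Rightarrow> nat set" where
  "return_set T x B = {i. (T ^^ i) x \<in> B}"

definition upper_density :: "nat set \<Rightarrow> ereal" where
  "upper_density D = limsup (\<lambda>N. ereal (real (card (D \<inter> {1..N})) / real N))"

definition cT :: "('a::real_normed_vector \<Rightarrow> 'a) \<Rightarrow> ereal" where
  "cT T = (SUP R\<in>{0<..}. SUP x\<in>HC T. upper_density (return_set T x (cball 0 R)))"

definition comeager :: "'a::topological_space set \<Rightarrow> bool" where
  "comeager A \<longleftrightarrow> (\<exists>\<F>. countable \<F> \<and> (\<forall>U\<in>\<F>. open U \<and> closure U = UNIV) \<and> \<Inter>\<F> \<subseteq> A)"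

end

theory Submission
  imports Defs
begin

lemma ud_le1: "upper_density D \<le> 1"
  unfolding upper_density_def
proof (rule Limsup_bounded, rule always_eventually, rule allI)
  fix N :: nat
  have "card (D \<inter> {1..N}) \<le> card {1..N}" by (rule card_mono) auto
  hence c: "card (D \<inter> {1..N}) \<le> N" by simp
  show "ereal (real (card (D \<inter> {1..N})) / real N) \<le> 1"
  proof (cases "N = 0")
    case True then show ?thesis by simp
  next
    case False then show ?thesis using c by (simp add: divide_le_eq_1)
  qed
qed

lemma ud_ge0: "0 \<le> upper_density D"
  unfolding upper_density_def
  by (rule le_Limsup) auto

lemma ud_mono: "D \<subseteq> E \<Longrightarrow> upper_density D \<le> upper_density E"
  unfolding upper_density_def
proof (rule Limsup_mono, rule always_eventually, rule allI)
  fix N :: nat assume "D \<subseteq> E"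
  hence "card (D \<inter> {1..N}) \<le> card (E \<inter> {1..N})" by (intro card_mono) auto
  thus "ereal (real (card (D \<inter> {1..N})) / real N) \<le> ereal (real (card (E \<inter> {1..N})) / real N)"
    by (simp add: divide_right_mono)
qed

lemma ud_freq:
  assumes "ereal \<delta> < upper_density D"
  shows "\<exists>M\<ge>N0. \<delta> * real M < real (card (D \<inter> {1..M}))"
proof (rule ccontr)
  assume "\<not> ?thesis"
  hence h: "\<And>M. M \<ge> N0 \<Longrightarrow> real (card (D \<inter> {1..M})) \<le> \<delta> * real M" by (auto simp: not_less)
  have "upper_density D \<le> ereal \<delta>" unfolding upper_density_def
  proof (rule Limsup_bounded)
    show "eventually (\<lambda>N. ereal (real (card (D \<inter> {1..N})) / real N) \<le> ereal \<delta>) sequentially"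
      using eventually_ge_at_top[of "max N0 1"]
    proof eventually_elim
      case (elim N)
      hence "real (card (D \<inter> {1..N})) \<le> \<delta> * real N" "real N > 0" using h by auto
      thus ?case by (simp add: pos_divide_le_eq)
    qed
  qed
  with assms show False by simp
qed

lemma ud_lower:
  assumes "\<And>N0. \<exists>N\<ge>N0. \<delta> * real N < real (card (D \<inter> {1..N}))"
  shows "ereal \<delta> \<le> upper_density D"
  unfolding upper_density_def limsup_INF_SUP
proof (rule INF_greatest)
  fix n :: nat
  obtain N where N: "N \<ge> max n 1" "\<delta> * real N < real (card (D \<inter> {1..N}))" using assms by blast
  hence "\<delta> \<le> real (card (D \<inter> {1..N})) / real N" by (simp add: pos_le_divide_eq)
  thus "ereal \<delta> \<le> (SUP m\<in>{n..}. ereal (real (card (D \<inter> {1..m})) / real m))"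
    using N by (intro SUP_upper2[of N]) auto
qed

lemma shift_lemma:
  fixes D :: "nat set"
  assumes "\<delta> < \<delta>'" and A: "\<And>N0. \<exists>M\<ge>N0. \<delta>' * real M < real (card (D \<inter> {1..M}))"
  shows "\<exists>N\<ge>N0. \<delta> * real N < real (card ({i. i+k \<in> D} \<inter> {1..N}))"
proof -
  obtain M0 :: nat where M0: "real k / (\<delta>'-\<delta>) < M0" using reals_Archimedean2 by blast
  have kM0: "real k < (\<delta>'-\<delta>) * M0" using M0 assms(1) by (simp add: divide_less_eq mult.commute)
  obtain M where M: "M \<ge> N0 + k + 1 + M0" "\<delta>' * real M < real (card (D \<inter> {1..M}))" using A by blast
  define N where "N = M - k"
  have N: "N \<ge> N0" "N \<ge> 1" "M = N + k" using M(1) unfolding N_def by auto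
  have sub: "D \<inter> {1..M} \<subseteq> {1..k} \<union> (\<lambda>i. i+k) ` ({i. i+k\<in>D} \<inter> {1..N})"
  proof
    fix j assume j: "j \<in> D \<inter> {1..M}"
    show "j \<in> {1..k} \<union> (\<lambda>i. i+k) ` ({i. i+k\<in>D} \<inter> {1..N})"
    proof (cases "j \<le> k")
      case True then show ?thesis using j by auto
    next
      case False
      hence "j = (j-k)+k" "j - k \<in> {i. i+k\<in>D} \<inter> {1..N}" using j N by auto
      then show ?thesis by (metis UnI2 image_eqI)
    qed
  qed
  have "card (D \<inter> {1..M}) \<le> card ({1..k} \<union> (\<lambda>i. i+k) ` ({i. i+k\<in>D} \<inter> {1..N}))"
    by (rule card_mono[OF _ sub]) auto
  also have "\<dots> \<le> card {1..k} + card ((\<lambda>i. i+k) ` ({i. i+k\<in>D} \<inter> {1..N}))" by (rule card_Un_le)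
  also have "\<dots> \<le> k + card ({i. i+k\<in>D} \<inter> {1..N})" using card_image_le[of "{i. i+k\<in>D} \<inter> {1..N}" "\<lambda>i. i+k"] by simp
  finally have c: "real (card (D \<inter> {1..M})) \<le> real k + real (card ({i. i+k\<in>D} \<inter> {1..N}))" by linarith
  have "(\<delta>'-\<delta>) * M0 \<le> (\<delta>'-\<delta>) * M" using assms(1) M(1) by (intro mult_left_mono) auto
  hence gt: "\<delta> * real M < real (card ({i. i+k\<in>D} \<inter> {1..N}))" using c kM0 M(2) by (simp add: algebra_simps)
  show ?thesis
  proof (cases "\<delta> \<ge> 0")
    case True
    hence "\<delta> * real N \<le> \<delta> * real M" using N by (intro mult_left_mono) auto
    then show ?thesis using gt N by (intro exI[of _ N]) auto
  next
    case False
    hence "\<delta> * real N < 0" using N by (simp add: mult_neg_pos)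
    then show ?thesis using N by (intro exI[of _ N]) auto
  qed
qed

lemma bl_funpow: fixes T :: "'a::real_normed_vector \<Rightarrow> 'a" shows "bounded_linear T \<Longrightarrow> bounded_linear (T ^^ n)"
proof (induction n)
  case 0
  have "(T^^0) = (\<lambda>x. x)" by auto
  then show ?case using bounded_linear_ident by metis
next
  case (Suc n)
  have "bounded_linear (\<lambda>x. T ((T^^n) x))" by (rule bounded_linear_compose[OF Suc.prems Suc.IH[OF Suc.prems]])
  then show ?case by (simp add: o_def)
qed

lemma open_vimage_funpow: fixes T :: "'a::real_normed_vector \<Rightarrow> 'a" shows "bounded_linear T \<Longrightarrow> open B \<Longrightarrow> open ((T^^n) -` B)"
  using continuous_on_open_vimage[of UNIV "T^^n"] linear_continuous_on[OF bl_funpow] by auto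

lemma HC_iff: "x \<in> HC T \<longleftrightarrow> (\<forall>y. \<forall>e>0. \<exists>n. dist ((T^^n) x) y < e)"
  unfolding HC_def by (auto simp: closure_approachable set_eq_iff)

lemma dense_iff': "closure (V::'a::metric_space set) = UNIV \<longleftrightarrow> (\<forall>y. \<forall>e>0. \<exists>u\<in>V. dist u y < e)"
  by (auto simp: closure_approachable set_eq_iff)

lemma hits:
  fixes T :: "'a::real_normed_vector \<Rightarrow> 'a"
  assumes x: "x \<in> HC T" and e: "e > 0"
  shows "\<exists>m\<ge>K. dist ((T^^m) x) y < e"
proof (cases "\<exists>v::'a. v \<noteq> 0")
  case False
  have h: "\<And>v::'a. v = 0" using False by blast
  have "(T^^K) x = y" using h[of "(T^^K) x"] h[of y] by simp
  then show ?thesis using e by (intro exI[of _ K]) auto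
next
  case True
  then obtain v :: 'a where v: "v \<noteq> 0" by blast
  define p where "p n = y + (e / (real n + 2) / norm v) *\<^sub>R v" for n :: nat
  have "inj p"
  proof (rule injI)
    fix a b assume "p a = p b"
    hence "(e / (real a + 2) / norm v) *\<^sub>R v = (e / (real b + 2) / norm v) *\<^sub>R v" unfolding p_def by simp
    hence "e / (real a + 2) / norm v = e / (real b + 2) / norm v" using v by (simp add: scaleR_cancel_right)
    hence "real a + 2 = real b + 2" using e v by (simp add: field_simps)
    thus "a = b" by simp
  qed
  hence inf: "infinite (range p)" by (rule range_inj_infinite)
  have pin: "dist (p n) y < e" for n
  proof -
    have "dist (p n) y = norm ((e / (real n + 2) / norm v) *\<^sub>R v)" unfolding p_def by (simp add: dist_norm)
    also have "\<dots> = e / (real n + 2)" using v e by simp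
    also have "\<dots> < e" using e by (simp add: divide_less_eq)
    finally show ?thesis .
  qed
  define F where "F = (\<lambda>j. (T^^j) x) ` {..<K}"
  have "finite F" unfolding F_def by simp
  hence "\<not> range p \<subseteq> F" using inf finite_subset by blast
  then obtain z where z: "z \<in> range p" "z \<notin> F" by blast
  have zy: "dist z y < e" using z pin by auto
  have "open (- F)" using \<open>finite F\<close> by (simp add: finite_imp_closed open_Compl)
  then obtain r where r: "r > 0" "ball z r \<subseteq> - F" using z(2) by (meson ComplI open_contains_ball)
  define r' where "r' = min r (e - dist z y)"
  have "r' > 0" using r zy unfolding r'_def by auto
  then obtain m where m: "dist ((T^^m) x) z < r'" using x unfolding HC_iff by blast
  hence "(T^^m) x \<in> ball z r" unfolding r'_def by (simp add: dist_commute)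
  hence "(T^^m) x \<notin> F" using r by auto
  hence "m \<ge> K" unfolding F_def by (auto simp: not_le)
  moreover have "dist ((T^^m) x) y < e"
    using dist_triangle[of "(T^^m) x" y z] m zy unfolding r'_def by linarith
  ultimately show ?thesis by blast
qed


theorem lemma4:
  fixes T :: "'a::{banach, second_countable_topology} \<Rightarrow> 'a"
    and \<alpha> :: real
  assumes "bounded_linear T"
    and "hypercyclic T"
    and "\<alpha> > 0"
  shows "comeager {x \<in> HC T. upper_density (return_set T x (cball 0 \<alpha>)) = cT T}"
proof -
  let ?U = "ball (0::'a) \<alpha>"
  obtain x0 where x0: "x0 \<in> HC T" using assms(2) unfolding hypercyclic_def by blast
  have ud_le_c: "upper_density (return_set T x (cball 0 R)) \<le> cT T" if "x \<in> HC T" "R > 0" for x R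
  proof -
    have "upper_density (return_set T x (cball 0 R)) \<le> (SUP x\<in>HC T. upper_density (return_set T x (cball 0 R)))"
      using that by (intro SUP_upper)
    also have "\<dots> \<le> cT T" unfolding cT_def using that by (intro SUP_upper) auto
    finally show ?thesis .
  qed
  have c0: "0 \<le> cT T" using ud_le_c[OF x0, of 1] ud_ge0 by (meson order_trans zero_less_one)
  have c1: "cT T \<le> 1" unfolding cT_def by (intro SUP_least ud_le1)
  obtain r where r: "cT T = ereal r" using c0 c1 by (cases "cT T") auto
  have sc: "(T^^n) (lam *\<^sub>R z) = lam *\<^sub>R (T^^n) z" for n lam z
    using bl_funpow[OF assms(1), of n] by (simp add: linear_scale bounded_linear.linear)
  have key: "\<exists>x1\<in>HC T. ereal \<delta> < upper_density (return_set T x1 ?U)" if "\<delta> < r" for \<delta>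
  proof -
    have "ereal \<delta> < cT T" using that r by simp
    then obtain R where R: "R > 0" "ereal \<delta> < (SUP x\<in>HC T. upper_density (return_set T x (cball 0 R)))"
      unfolding cT_def less_SUP_iff by auto
    then obtain x where x: "x \<in> HC T" "ereal \<delta> < upper_density (return_set T x (cball 0 R))"
      unfolding less_SUP_iff by auto
    define lam where "lam = \<alpha> / (2*R)"
    have lam: "lam > 0" using R assms(3) unfolding lam_def by simp
    have hc: "lam *\<^sub>R x \<in> HC T"
      unfolding HC_iff
    proof (intro allI impI)
      fix y :: 'a and e :: real assume e: "e > 0"
      obtain n where n: "dist ((T^^n) x) ((1/lam) *\<^sub>R y) < e / lam"
        using x(1) e lam unfolding HC_iff by (meson divide_pos_pos)
      have "dist ((T^^n) (lam *\<^sub>R x)) y = norm (lam *\<^sub>R ((T^^n) x - (1/lam) *\<^sub>R y))"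
        using lam by (simp add: sc dist_norm scaleR_right_diff_distrib)
      also have "\<dots> = lam * dist ((T^^n) x) ((1/lam) *\<^sub>R y)" using lam by (simp add: dist_norm)
      also have "\<dots> < e" using n lam by (simp add: pos_less_divide_eq mult.commute)
      finally show "\<exists>n. dist ((T^^n) (lam *\<^sub>R x)) y < e" by blast
    qed
    have lR: "lam * R < \<alpha>" using R assms(3) unfolding lam_def by (simp add: field_simps)
    have "return_set T x (cball 0 R) \<subseteq> return_set T (lam *\<^sub>R x) ?U"
    proof
      fix i assume "i \<in> return_set T x (cball 0 R)"
      hence "norm ((T^^i) x) \<le> R" unfolding return_set_def by simp
      hence "lam * norm ((T^^i) x) \<le> lam * R" using lam by (simp add: mult_left_mono)
      hence "lam * norm ((T^^i) x) < \<alpha>" using lR by linarith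
      then show "i \<in> return_set T (lam *\<^sub>R x) ?U" unfolding return_set_def using lam by (simp add: sc)
    qed
    hence "upper_density (return_set T x (cball 0 R)) \<le> upper_density (return_set T (lam *\<^sub>R x) ?U)"
      by (rule ud_mono)
    thus ?thesis using hc x(2) by (meson order_less_le_trans)
  qed
  define A where "A \<delta> N0 = (\<Union>N\<in>{N0..}. \<Union>S\<in>{S. S \<subseteq> {1..N} \<and> \<delta> * real N < real (card S)}. \<Inter>i\<in>S. (T^^i) -` ?U)" for \<delta> N0
  have A_iff: "x \<in> A \<delta> N0 \<longleftrightarrow> (\<exists>N\<ge>N0. \<delta> * real N < real (card (return_set T x ?U \<inter> {1..N})))" for x \<delta> N0
  proof
    assume "x \<in> A \<delta> N0"
    then obtain N S where NS: "N \<ge> N0" "S \<subseteq> {1..N}" "\<delta> * real N < real (card S)" "\<forall>i\<in>S. (T^^i) x \<in> ?U"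
      unfolding A_def by auto
    then have "S \<subseteq> return_set T x ?U \<inter> {1..N}" unfolding return_set_def by auto
    hence "card S \<le> card (return_set T x ?U \<inter> {1..N})" by (intro card_mono) auto
    thus "\<exists>N\<ge>N0. \<delta> * real N < real (card (return_set T x ?U \<inter> {1..N}))" using NS
      by (intro exI[of _ N]) auto
  next
    assume "\<exists>N\<ge>N0. \<delta> * real N < real (card (return_set T x ?U \<inter> {1..N}))"
    then obtain N where N: "N \<ge> N0" "\<delta> * real N < real (card (return_set T x ?U \<inter> {1..N}))" by blast
    show "x \<in> A \<delta> N0" unfolding A_def
      by (rule UN_I[of N], use N in simp, rule UN_I[of "return_set T x ?U \<inter> {1..N}"])
         (use N in \<open>auto simp: return_set_def\<close>)
  qed
  have A_open: "open (A \<delta> N0)" for \<delta> N0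
  proof -
    have "open (\<Inter>i\<in>S. (T^^i) -` ?U)" if "S \<subseteq> {1..N}" for S N
      using finite_subset[OF that] by (intro open_INT) (auto intro: open_vimage_funpow[OF assms(1)])
    thus ?thesis unfolding A_def by (auto intro!: open_UN)
  qed
  have A_dense: "closure (A \<delta> N0) = UNIV" if "\<delta> < r" for \<delta> N0
  proof -
    define \<delta>' where "\<delta>' = (\<delta> + r)/2"
    have d1: "\<delta> < \<delta>'" and d2: "\<delta>' < r" using that by (auto simp: \<delta>'_def)
    obtain x1 where x1: "x1 \<in> HC T" "ereal \<delta>' < upper_density (return_set T x1 ?U)" using key[OF d2] by blast
    have fr: "\<exists>M\<ge>N0'. \<delta>' * real M < real (card (return_set T x1 ?U \<inter> {1..M}))" for N0'
      using ud_freq[OF x1(2)] by blast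
    show ?thesis unfolding dense_iff'
    proof (intro allI impI)
      fix y :: 'a and e :: real assume "e > 0"
      then obtain k where k: "dist ((T^^k) x1) y < e" using x1(1) unfolding HC_iff by blast
      have rs: "return_set T ((T^^k) x1) ?U = {i. i+k \<in> return_set T x1 ?U}"
        unfolding return_set_def by (simp add: funpow_add)
      have "(T^^k) x1 \<in> A \<delta> N0" unfolding A_iff rs using shift_lemma[OF d1 fr] by blast
      thus "\<exists>u\<in>A \<delta> N0. dist u y < e" using k by blast
    qed
  qed
  obtain D :: "'a set" where D: "countable D" "\<And>X. open X \<Longrightarrow> X \<noteq> {} \<Longrightarrow> \<exists>d\<in>D. d \<in> X"
    using countable_dense_exists by blast
  define Ob where "Ob d m = (\<Union>n. (T^^n) -` ball d (1/(real m+1)))" for d and m :: nat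
  have Ob_open: "open (Ob d m)" for d m
    unfolding Ob_def by (auto intro!: open_UN open_vimage_funpow[OF assms(1)])
  have Ob_dense: "closure (Ob d m) = UNIV" for d m
    unfolding dense_iff'
  proof (intro allI impI)
    fix y :: 'a and e :: real assume "e > 0"
    then obtain k where k: "dist ((T^^k) x0) y < e" using x0 unfolding HC_iff by blast
    obtain m' where m': "m' \<ge> k" "dist ((T^^m') x0) d < 1/(real m+1)"
      using hits[OF x0, of "1/(real m+1)" k d] by auto
    have "(T^^(m'-k)) ((T^^k) x0) = (T^^(m'-k+k)) x0" by (simp add: funpow_add)
    also have "\<dots> = (T^^m') x0" using m'(1) by simp
    finally have "(T^^k) x0 \<in> Ob d m" unfolding Ob_def using m'(2)
      by (intro UN_I[of "m'-k"]) (auto simp: dist_commute)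
    thus "\<exists>u\<in>Ob d m. dist u y < e" using k by blast
  qed
  have Ob_HC: "x \<in> HC T" if xo: "\<forall>d\<in>D. \<forall>m. x \<in> Ob d m" for x
    unfolding HC_iff
  proof (intro allI impI)
    fix y :: 'a and e :: real assume e: "e > 0"
    obtain m :: nat where m: "inverse (real (Suc m)) < e/2" using reals_Archimedean[of "e/2"] e by auto
    have m2: "1/(real m+1) < e/2" using m by (simp add: field_simps)
    obtain d where d: "d \<in> D" "d \<in> ball y (1/(real m+1))"
      using D(2)[of "ball y (1/(real m+1))"] by auto
    obtain n where n: "dist d ((T^^n) x) < 1/(real m+1)" using xo d(1) unfolding Ob_def by fastforce
    have "dist ((T^^n) x) y \<le> dist ((T^^n) x) d + dist d y" by (rule dist_triangle)
    also have "\<dots> < e" using n d(2) m2 by (simp add: dist_commute)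
    finally show "\<exists>n. dist ((T^^n) x) y < e" by blast
  qed
  define F where "F = (\<lambda>(d,m). Ob d m) ` (D \<times> UNIV) \<union> (\<lambda>(n,N0). A (r - 1/(real n+1)) N0) ` UNIV"
  show ?thesis unfolding comeager_def
  proof (intro exI[of _ F] conjI)
    show "countable F" unfolding F_def using D(1) by (intro countable_Un countable_image countable_SIGMA) auto
    show "\<forall>U\<in>F. open U \<and> closure U = UNIV" unfolding F_def using Ob_open Ob_dense A_open A_dense by auto
    show "\<Inter>F \<subseteq> {x \<in> HC T. upper_density (return_set T x (cball 0 \<alpha>)) = cT T}"
    proof
      fix x assume x: "x \<in> \<Inter>F"
      have xO: "\<forall>d\<in>D. \<forall>m. x \<in> Ob d m" using x unfolding F_def by blast
      have xA: "x \<in> A (r - 1/(real n+1)) N0" for n N0 using x unfolding F_def by blast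
      have xHC: "x \<in> HC T" using Ob_HC xO by blast
      let ?ud = "upper_density (return_set T x (cball 0 \<alpha>))"
      have le: "?ud \<le> ereal r" using ud_le_c[OF xHC assms(3)] r by simp
      have ge: "ereal (r - 1/(real n+1)) \<le> ?ud" for n
      proof -
        have "ereal (r - 1/(real n+1)) \<le> upper_density (return_set T x ?U)"
          using xA[of n] unfolding A_iff by (intro ud_lower) blast
        also have "\<dots> \<le> ?ud" by (intro ud_mono) (auto simp: return_set_def)
        finally show ?thesis .
      qed
      obtain u where u: "?ud = ereal u" using ud_ge0[of "return_set T x (cball 0 \<alpha>)"] ud_le1[of "return_set T x (cball 0 \<alpha>)"]
        by (cases ?ud) auto
      have "r \<le> u"
      proof (rule ccontr)
        assume "\<not> r \<le> u"
        then obtain n where n: "inverse (real (Suc n)) < r - u" using reals_Archimedean[of "r-u"] by auto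
        have "r - 1/(real n+1) \<le> u" using ge[of n] u by simp
        with n show False by (simp add: field_simps)
      qed
      hence "?ud = cT T" using le u r by simp
      thus "x \<in> {x \<in> HC T. upper_density (return_set T x (cball 0 \<alpha>)) = cT T}" using xHC by simp
    qed
  qed
qed

end
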